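(* Let $1=v_1\ge v_2\ge v_3\ge v_4>0$ and, for $i\in\{1,2,3,4\}$ and $j\in\{A,B,C\}$, let $T_{ij}$ be the probability that $a_i$ wins the knockout tournament of type $j$. Consider the equations $$\frac{4T_{1A}-2T_{1B}-2T_{1C}}{5T_{1A}-T_{1B}-4T_{1C}}=\frac{4T_{2A}-2T_{2B}-2T_{2C}}{5T_{2A}-T_{2B}-4T_{2C}},\qquad \frac{4T_{3A}-2T_{3C}-2T_{3B}}{5T_{3A}-T_{3B}-4T_{3C}}=\frac{4T_{4A}-2T_{4C}-2T_{4B}}{5T_{4A}-T_{4B}-4T_{4C}}.$$ The only solutions of these equations are the weight vectors with $v_1=v_2=1$ and $v_3=v_4\le 1$.
   Context: Four teams $a_1,\dots,a_4$ with weights $v_1,\dots,v_4$. In any game between $a_i$ and $a_j$, $a_i$ wins with probability $v_i/(v_i+v_j)$, independently. A knockout tournament consists of two first-round games whose winners meet in a final. Tournament $A$: first round $a_1$ vs $a_4$ and $a_2$ vs $a_3$. Tournament $B$: $a_1$ vs $a_3$ and $a_2$ vs $a_4$. Tournament $C$: $a_1$ vs $a_2$ and $a_3$ vs $a_4$. *)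

theory Defs
  imports Complex_Main
begin

definition beat :: "(nat \<Rightarrow> real) \<Rightarrow> nat \<Rightarrow> nat \<Rightarrow> real" where
  "beat v i j = v i / (v i + v j)"

text \<open>Knockout tournament with first-round games a vs b and c vs d, whose winners meet
  in the final. win_prob v (a,b) (c,d) i is the probability that team i wins it
  (for i one of a,b,c,d).\<close>

definition win_prob :: "(nat \<Rightarrow> real) \<Rightarrow> nat \<times> nat \<Rightarrow> nat \<times> nat \<Rightarrow> nat \<Rightarrow> real" where
  "win_prob v g1 g2 i =
     (let (a, b) = g1; (c, d) = g2 in
      if i = a then beat v a b * (beat v c d * beat v a c + beat v d c * beat v a d)
      else if i = b then beat v b a * (beat v c d * beat v b c + beat v d c * beat v b d)
      else if i = c then beat v c d * (beat v a b * beat v c a + beat v b a * beat v c b)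
      else if i = d then beat v d c * (beat v a b * beat v d a + beat v b a * beat v d b)
      else 0)"

definition TA :: "(nat \<Rightarrow> real) \<Rightarrow> nat \<Rightarrow> real" where
  "TA v i = win_prob v (1, 4) (2, 3) i"

definition TB :: "(nat \<Rightarrow> real) \<Rightarrow> nat \<Rightarrow> real" where
  "TB v i = win_prob v (1, 3) (2, 4) i"

definition TC :: "(nat \<Rightarrow> real) \<Rightarrow> nat \<Rightarrow> real" where
  "TC v i = win_prob v (1, 2) (3, 4) i"

end

theory Submission
  imports Defs
begin

lemma ND:
  fixes v :: "nat \<Rightarrow> real"
  assumes "v 1 = 1" "v 2 > 0" "v 3 > 0" "v 4 > 0"
  defines "L \<equiv> (1+v 2)*(1+v 3)*(1+v 4)*(v 2+v 3)*(v 2+v 4)*(v 3+v 4)"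
  shows "4 * TA v 1 - 2 * TB v 1 - 2 * TC v 1 = (8*v 2^2*v 3^2 - 4*v 3^2*v 4^2 - 4*v 2^2*v 4^2) / L"
    and "5 * TA v 1 - TB v 1 - 4 * TC v 1 = (10*v 2^2*v 3^2 - 8*v 3^2*v 4^2 - 2*v 2^2*v 4^2) / L"
    and "4 * TA v 2 - 2 * TB v 2 - 2 * TC v 2 = (8*v 2^2*v 4^2 - 4*v 2^2*v 3^2 - 4*v 2^2*v 3^2*v 4^2) / L"
    and "5 * TA v 2 - TB v 2 - 4 * TC v 2 = (10*v 2^2*v 4^2 - 2*v 2^2*v 3^2 - 8*v 2^2*v 3^2*v 4^2) / L"
    and "4 * TA v 3 - 2 * TC v 3 - 2 * TB v 3 = (8*v 3^2*v 4^2 - 4*v 2^2*v 3^2 - 4*v 2^2*v 3^2*v 4^2) / L"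
    and "5 * TA v 3 - TB v 3 - 4 * TC v 3 = (10*v 3^2*v 4^2 - 8*v 2^2*v 3^2 - 2*v 2^2*v 3^2*v 4^2) / L"
    and "4 * TA v 4 - 2 * TC v 4 - 2 * TB v 4 = (8*v 2^2*v 3^2*v 4^2 - 4*v 3^2*v 4^2 - 4*v 2^2*v 4^2) / L"
    and "5 * TA v 4 - TB v 4 - 4 * TC v 4 = (10*v 2^2*v 3^2*v 4^2 - 2*v 3^2*v 4^2 - 8*v 2^2*v 4^2) / L"
proof -
  have p: "1+v 2 \<noteq> 0" "1+v 3\<noteq>0" "1+v 4\<noteq>0" "v 2+v 3\<noteq>0" "v 2+v 4\<noteq>0" "v 3+v 4\<noteq>0"
    "v 2+1 \<noteq> 0" "v 3+1\<noteq>0" "v 4+1\<noteq>0" "v 3+v 2\<noteq>0" "v 4+v 2\<noteq>0" "v 4+v 3\<noteq>0"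
    using assms by auto
  have s1: "v (Suc 0) = 1" using assms by simp
  show "4 * TA v 1 - 2 * TB v 1 - 2 * TC v 1 = (8*v 2^2*v 3^2 - 4*v 3^2*v 4^2 - 4*v 2^2*v 4^2) / L"
    unfolding TA_def TB_def TC_def win_prob_def beat_def L_def
    apply (simp add: Let_def assms(1) s1)
    apply (simp add: divide_simps p)
    apply algebra
    done
  show "5 * TA v 1 - TB v 1 - 4 * TC v 1 = (10*v 2^2*v 3^2 - 8*v 3^2*v 4^2 - 2*v 2^2*v 4^2) / L"
    unfolding TA_def TB_def TC_def win_prob_def beat_def L_def
    apply (simp add: Let_def assms(1) s1)
    apply (simp add: divide_simps p)
    apply algebra
    done
  show "4 * TA v 2 - 2 * TB v 2 - 2 * TC v 2 = (8*v 2^2*v 4^2 - 4*v 2^2*v 3^2 - 4*v 2^2*v 3^2*v 4^2) / L"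
    unfolding TA_def TB_def TC_def win_prob_def beat_def L_def
    apply (simp add: Let_def assms(1) s1)
    apply (simp add: divide_simps p)
    apply algebra
    done
  show "5 * TA v 2 - TB v 2 - 4 * TC v 2 = (10*v 2^2*v 4^2 - 2*v 2^2*v 3^2 - 8*v 2^2*v 3^2*v 4^2) / L"
    unfolding TA_def TB_def TC_def win_prob_def beat_def L_def
    apply (simp add: Let_def assms(1) s1)
    apply (simp add: divide_simps p)
    apply algebra
    done
  show "4 * TA v 3 - 2 * TC v 3 - 2 * TB v 3 = (8*v 3^2*v 4^2 - 4*v 2^2*v 3^2 - 4*v 2^2*v 3^2*v 4^2) / L"
    unfolding TA_def TB_def TC_def win_prob_def beat_def L_def
    apply (simp add: Let_def assms(1) s1)
    apply (simp add: divide_simps p)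
    apply algebra
    done
  show "5 * TA v 3 - TB v 3 - 4 * TC v 3 = (10*v 3^2*v 4^2 - 8*v 2^2*v 3^2 - 2*v 2^2*v 3^2*v 4^2) / L"
    unfolding TA_def TB_def TC_def win_prob_def beat_def L_def
    apply (simp add: Let_def assms(1) s1)
    apply (simp add: divide_simps p)
    apply algebra
    done
  show "4 * TA v 4 - 2 * TC v 4 - 2 * TB v 4 = (8*v 2^2*v 3^2*v 4^2 - 4*v 3^2*v 4^2 - 4*v 2^2*v 4^2) / L"
    unfolding TA_def TB_def TC_def win_prob_def beat_def L_def
    apply (simp add: Let_def assms(1) s1)
    apply (simp add: divide_simps p)
    apply algebra
    done
  show "5 * TA v 4 - TB v 4 - 4 * TC v 4 = (10*v 2^2*v 3^2*v 4^2 - 2*v 3^2*v 4^2 - 8*v 2^2*v 4^2) / L"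
    unfolding TA_def TB_def TC_def win_prob_def beat_def L_def
    apply (simp add: Let_def assms(1) s1)
    apply (simp add: divide_simps p)
    apply algebra
    done
qed

lemma alg:
  fixes x y z :: real
  assumes z0: "0 < z" and zy: "z \<le> y" and yx: "y \<le> x" and x1: "x \<le> 1"
    and e1: "(8*x*y - 4*y*z - 4*x*z) / (10*x*y - 8*y*z - 2*x*z)
           = (8*x*z - 4*x*y - 4*x*y*z) / (10*x*z - 2*x*y - 8*x*y*z)"
    and e2: "(8*y*z - 4*x*y - 4*x*y*z) / (10*y*z - 8*x*y - 2*x*y*z)
           = (8*x*y*z - 4*y*z - 4*x*z) / (10*x*y*z - 2*y*z - 8*x*z)"
  shows "x = 1 \<and> y = z"
proof -
  have y0: "0 < y" and x0: "0 < x" using z0 zy yx by auto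
  have yz: "y = z"
  proof (cases "10*x*y - 8*y*z - 2*x*z = 0")
    case True
    have a1: "y*(x-z) \<ge> 0" using y0 zy yx by simp
    have a2: "x*(y-z) \<ge> 0" using x0 zy by simp
    have "4*(y*(x-z)) + x*(y-z) = 0" using True by (simp add: algebra_simps)
    hence "x*(y-z) = 0" using a1 a2 by linarith
    thus ?thesis using x0 by simp
  next
    case d1: False
    show ?thesis
    proof (cases "10*x*z - 2*x*y - 8*x*y*z = 0")
      case True
      hence "8*x*y - 4*y*z - 4*x*z = 0" using e1 d1 by simp
      hence "2*(y*(x-z)) + 2*(x*(y-z)) = 0" by (simp add: algebra_simps)
      moreover have a1: "y*(x-z) \<ge> 0" using y0 zy yx by simp
      moreover have a2: "x*(y-z) \<ge> 0" using x0 zy by simp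
      ultimately have "x*(y-z) = 0" by linarith
      thus ?thesis using x0 by simp
    next
      case d2: False
      have "(8*x*y - 4*y*z - 4*x*z) * (10*x*z - 2*x*y - 8*x*y*z)
          = (8*x*z - 4*x*y - 4*x*y*z) * (10*x*y - 8*y*z - 2*x*z)"
        using e1 d1 d2 by (simp add: divide_simps)
      hence "24 * x * (z-y) * (y*z + x*y*z - x*y - x*z) = 0" by algebra
      hence h: "z = y \<or> y*z + x*y*z - x*y - x*z = 0" using x0 by simp
      show ?thesis
      proof (rule ccontr)
        assume "y \<noteq> z"
        hence zl: "z < y" using zy by simp
        hence z1: "z < 1" using yx x1 by simp
        have "y*z \<le> x*z" using yx z0 by (simp add: mult_right_mono)
        moreover have "x*y*z < x*y" using x0 y0 z1 by simp
        ultimately have "y*z + x*y*z - x*y - x*z < 0" by linarith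
        thus False using h zl by simp
      qed
    qed
  qed
  have x1': "x = 1"
  proof (rule ccontr)
    assume "x \<noteq> 1"
    hence xl: "x < 1" using x1 by simp
    have "y*(5*x-1) \<le> x*(5*x-1) \<or> 5*x - 1 < 0" using yx by (cases "5*x-1 < 0") (auto intro: mult_right_mono)
    hence "5*x*y - y - 4*x < 0"
    proof
      assume "y*(5*x-1) \<le> x*(5*x-1)"
      moreover have "x*(5*x-1) - 4*x < 0" using x0 xl by (simp add: algebra_simps)
      ultimately show ?thesis by (simp add: algebra_simps)
    next
      assume "5*x - 1 < 0"
      hence "y*(5*x-1) < 0" using y0 by (simp add: mult_pos_neg)
      thus ?thesis using x0 by (simp add: algebra_simps)
    qed
    hence "2*y*(5*x*y - y - 4*x) < 0" using y0 by (simp add: mult_pos_neg)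
    moreover have "10*x*y*z - 2*y*z - 8*x*z = 2*y*(5*x*y - y - 4*x)" unfolding yz by algebra
    ultimately have d4: "10*x*y*z - 2*y*z - 8*x*z \<noteq> 0" by linarith
    have "x*(y-1) \<le> 0" using x0 yx x1 by (simp add: mult_nonneg_nonpos)
    moreover have "y*(x-1) < 0" using y0 xl by (simp add: mult_pos_neg)
    ultimately have "x*(y-1) + y*(x-1) < 0" by linarith
    hence "4*y*(x*(y-1) + y*(x-1)) < 0" using y0 by (simp add: mult_pos_neg)
    moreover have "8*x*y*z - 4*y*z - 4*x*z = 4*y*(x*(y-1) + y*(x-1))" unfolding yz by algebra
    ultimately have n4: "8*x*y*z - 4*y*z - 4*x*z \<noteq> 0" by linarith
    have d3: "10*y*z - 8*x*y - 2*x*y*z \<noteq> 0"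
      using e2 d4 n4 by auto
    have "(8*y*z - 4*x*y - 4*x*y*z) * (10*x*y*z - 2*y*z - 8*x*z)
          = (8*x*y*z - 4*y*z - 4*x*z) * (10*y*z - 8*x*y - 2*x*y*z)"
        using e2 d3 d4 by (simp add: divide_simps)
    hence "24 * y^2 * ((1-x)*y*(y*(1+x)-2*x)) = 0" unfolding yz by algebra
    hence "y*(1+x) - 2*x = 0" using y0 xl by simp
    moreover have "y*(1+x) \<le> x*(1+x)" using yx x0 by (simp add: mult_right_mono)
    moreover have "x*(1+x) < 2*x" using x0 xl by simp
    ultimately show False by simp
  qed
  show ?thesis using x1' yz by simp
qed

lemma divL: "(L::real) \<noteq> 0 \<Longrightarrow> (n / L) / (d / L) = n / d"
  by (cases "d = 0") (simp_all add: divide_simps)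

theorem theorem9:
  fixes v :: "nat \<Rightarrow> real"
  assumes "v 1 = 1" and "v 1 \<ge> v 2" and "v 2 \<ge> v 3" and "v 3 \<ge> v 4" and "v 4 > 0"
    and eq1: "(4 * TA v 1 - 2 * TB v 1 - 2 * TC v 1) / (5 * TA v 1 - TB v 1 - 4 * TC v 1)
            = (4 * TA v 2 - 2 * TB v 2 - 2 * TC v 2) / (5 * TA v 2 - TB v 2 - 4 * TC v 2)"
    and eq2: "(4 * TA v 3 - 2 * TC v 3 - 2 * TB v 3) / (5 * TA v 3 - TB v 3 - 4 * TC v 3)
            = (4 * TA v 4 - 2 * TC v 4 - 2 * TB v 4) / (5 * TA v 4 - TB v 4 - 4 * TC v 4)"
  shows "v 2 = 1 \<and> v 3 = v 4"
proof -
  have p4: "v 4 > 0" using assms by simp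
  have p3: "v 3 > 0" using assms by simp
  have p2: "v 2 > 0" using assms by simp
  define L where "L = (1+v 2)*(1+v 3)*(1+v 4)*(v 2+v 3)*(v 2+v 4)*(v 3+v 4)"
  have L0: "L \<noteq> 0" unfolding L_def using p2 p3 p4 by simp
  note nd = ND[OF assms(1) p2 p3 p4, folded L_def]
  have e1: "(8*v 2^2*v 3^2 - 4*v 3^2*v 4^2 - 4*v 2^2*v 4^2) / (10*v 2^2*v 3^2 - 8*v 3^2*v 4^2 - 2*v 2^2*v 4^2)
     = (8*v 2^2*v 4^2 - 4*v 2^2*v 3^2 - 4*v 2^2*v 3^2*v 4^2) / (10*v 2^2*v 4^2 - 2*v 2^2*v 3^2 - 8*v 2^2*v 3^2*v 4^2)"
    using eq1 unfolding nd divL[OF L0] .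
  have e2: "(8*v 3^2*v 4^2 - 4*v 2^2*v 3^2 - 4*v 2^2*v 3^2*v 4^2) / (10*v 3^2*v 4^2 - 8*v 2^2*v 3^2 - 2*v 2^2*v 3^2*v 4^2)
     = (8*v 2^2*v 3^2*v 4^2 - 4*v 3^2*v 4^2 - 4*v 2^2*v 4^2) / (10*v 2^2*v 3^2*v 4^2 - 2*v 3^2*v 4^2 - 8*v 2^2*v 4^2)"
    using eq2 unfolding nd divL[OF L0] .
  have o1: "(v 4)^2 \<le> (v 3)^2" using assms p4 by (simp add: power_mono)
  have o2: "(v 3)^2 \<le> (v 2)^2" using assms p3 by (simp add: power_mono)
  have o3: "(v 2)^2 \<le> 1" using assms p2 by (metis power_mono power_one less_imp_le)
  have r: "(v 2)^2 = 1 \<and> (v 3)^2 = (v 4)^2"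
    using alg[of "(v 4)^2" "(v 3)^2" "(v 2)^2", OF _ o1 o2 o3] e1 e2 p4 by simp
  have "v 2 = 1" using r p2 power2_eq_1_iff[of "v 2"] by auto
  moreover have "v 3 = v 4" using r p3 p4 by (simp add: power2_eq_iff_nonneg)
  ultimately show ?thesis by simp
qed

end
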